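(* Define $C_1(h)=\binom{4h+2}{h}$, $C_2(h)=\frac{2h+1}{4h+1}\binom{4h+1}{h}$, $C_3(h)=\frac12\binom{4h}{h}$, $C_4(h)=\binom{4h+1}{h}$ (equivalently $C_1(h)=\tfrac12C(2h+1,h+1)$, $C_2(h)=\tfrac12C(2h,h+1)$, $C_3(h)=\tfrac12C(2h,h)$, $C_4(h)=\tfrac12C(2h+1,h)$). Then for any positive integer $h$, \[\sum_{j=0}^hC_3(j)C_3(h-j)=2\sum_{j=0}^{h-1}C_2(j)C_1(h-1-j),\] \[\sum_{j=0}^hC_3(j)C_4(h-j)=\sum_{j=0}^hC_2(j)C_3(h-j)+\sum_{j=0}^{h-1}C_1(j)C_1(h-1-j),\] \[\sum_{j=0}^hC_4(j)C_4(h-j)=2\sum_{j=0}^hC_3(j)C_1(h-j).\]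
   Context: $C(p,q)=\frac{(2p)!(2q)!}{p!(p+q)!q!}$. *)

theory Defs
  imports Complex_Main
begin

definition C1 :: "nat \<Rightarrow> real" where
  "C1 h = real ((4*h+2) choose h)"

definition C2 :: "nat \<Rightarrow> real" where
  "C2 h = (2 * real h + 1) / (4 * real h + 1) * real ((4*h+1) choose h)"

definition C3 :: "nat \<Rightarrow> real" where
  "C3 h = (1/2) * real ((4*h) choose h)"

definition C4 :: "nat \<Rightarrow> real" where
  "C4 h = real ((4*h+1) choose h)"

end

theory Submission
  imports Defs
begin

definition aa :: "nat \<Rightarrow> nat \<Rightarrow> nat" where
  "aa r k = (4*k + r - 1) choose k"

definition FF :: "nat \<Rightarrow> nat \<Rightarrow> nat \<Rightarrow> nat" where
  "FF r s n = (\<Sum>k=0..n. aa r k * aa s (n-k))"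

lemma aa0[simp]: "aa r 0 = 1" by (simp add: aa_def)

lemma aa_rec: "aa (r+1) (Suc k) = aa r (Suc k) + aa (r+4) k"
proof -
  have "4 * Suc k + (r+1) - 1 = Suc (4*k+r+3)" by simp
  moreover have "4 * Suc k + r - 1 = 4*k+r+3" by simp
  moreover have "4*k + (r+4) - 1 = 4*k+r+3" by simp
  ultimately show ?thesis unfolding aa_def by (simp only: binomial_Suc_Suc)
qed

lemma aa_delta: "4 * aa 0 (Suc k) = 3 * aa 1 (Suc k)"
proof -
  have "(4*k+4 - (k+1)) * ((4*k+4) choose (k+1)) = (4*k+4) * ((4*k+4-1) choose (k+1))"
    by (rule binomial_absorb_comp)
  then have "(k+1) * (3 * ((4*k+4) choose (k+1))) = (k+1) * (4 * ((4*k+3) choose (k+1)))"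
    by (simp add: algebra_simps)
  then have "3 * ((4*k+4) choose (k+1)) = 4 * ((4*k+3) choose (k+1))" by (simp only: mult_cancel_left) simp
  then show ?thesis unfolding aa_def by (simp add: ac_simps)
qed

lemma FF_comm: "FF r s n = FF s r n"
  unfolding FF_def
  by (subst sum.atLeastAtMost_rev) (simp add: mult.commute)

lemma FF_split: "FF r s (Suc n) = aa s (Suc n) + (\<Sum>k=0..n. aa r (Suc k) * aa s (n-k))"
  unfolding FF_def by (subst sum.atLeast0_atMost_Suc_shift) simp

lemma FF_rec: "FF (r+1) s (Suc n) = FF r s (Suc n) + FF (r+4) s n"
proof -
  have "FF (r+1) s (Suc n) = aa s (Suc n) + (\<Sum>k=0..n. (aa r (Suc k) + aa (r+4) k) * aa s (n-k))"
    by (simp add: FF_split aa_rec del: One_nat_def)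
  also have "\<dots> = aa s (Suc n) + (\<Sum>k=0..n. aa r (Suc k) * aa s (n-k)) + FF (r+4) s n"
    by (simp add: FF_def algebra_simps sum.distrib)
  also have "\<dots> = FF r s (Suc n) + FF (r+4) s n" by (simp add: FF_split)
  finally show ?thesis .
qed

lemma FF_sym: "\<forall>r s. FF r s n = FF 0 (r+s) n"
proof (induction n)
  case 0
  then show ?case by (simp add: FF_def)
next
  case (Suc n)
  have step: "FF (r+1) s (Suc n) = FF r (s+1) (Suc n)" for r s
  proof -
    have "FF r (s+1) (Suc n) = FF (s+1) r (Suc n)" by (rule FF_comm)
    also have "\<dots> = FF s r (Suc n) + FF (s+4) r n" by (rule FF_rec)
    also have "\<dots> = FF r s (Suc n) + FF r (s+4) n" by (simp add: FF_comm)
    finally show ?thesis using FF_rec[of r s n] Suc.IH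
      by (metis add.commute add.left_commute)
  qed
  have "FF r s (Suc n) = FF 0 (r+s) (Suc n)" for r s
  proof (induction r arbitrary: s)
    case 0 then show ?case by simp
  next
    case (Suc r)
    then show ?case using step[of r s] by (metis Suc_eq_plus1 add_Suc_shift)
  qed
  then show ?case by blast
qed

lemma FFs: "FF r s n = FF 0 (r+s) n" using FF_sym by blast

lemma G_rec: "FF 0 (m+1) (Suc n) = FF 0 m (Suc n) + FF 0 (m+4) n"
  using FF_rec[of 0 m n] FFs[of 1 m] FFs[of 4 m n] by (simp add: add.commute)

lemma G_delta: "4 * FF 0 s n = 3 * FF 1 s n + aa s n"
proof (cases n)
  case 0 then show ?thesis by (simp add: FF_def)
next
  case (Suc p)
  have "4 * (\<Sum>k=0..p. aa 0 (Suc k) * aa s (p-k)) = 3 * (\<Sum>k=0..p. aa 1 (Suc k) * aa s (p-k))"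
    by (simp add: sum_distrib_left mult.assoc[symmetric] aa_delta)
  then show ?thesis using Suc by (simp add: FF_split)
qed

lemma G_ii: "n \<ge> 1 \<Longrightarrow> 16 * FF 0 0 n + 9 * FF 0 2 n = 24 * FF 0 1 n"
proof -
  assume "n \<ge> 1"
  then obtain p where p: "n = Suc p" by (cases n) auto
  have d: "4 * aa 0 n = 3 * aa 1 n" using p aa_delta by simp
  have e1: "4 * FF 0 0 n = 3 * FF 0 1 n + aa 0 n" using G_delta[of 0 n] FFs[of 1 0 n] by simp
  have f2: "FF 1 1 n = FF 0 2 n" using FFs[of 1 1 n] unfolding one_add_one .
  have e2: "4 * FF 0 1 n = 3 * FF 0 2 n + aa 1 n" using G_delta[of 1 n] f2 by linarith
  show ?thesis using d e1 e2 by linarith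
qed

lemma aux: "(d::real) \<noteq> 0 \<Longrightarrow> ((A/d) + Y)/2 - 3/2*(B/d) = (A + d*Y - 3*B)/(2*d)"
  by (simp add: field_simps)

lemma aux2: "2 * (W::real) / (2*d) = W/d"
  by simp

lemma C2_formula: "C2 j = (real (aa 2 j) + real (aa 1 j)) / 2 - 3/2 * (if j = 0 then 0 else real (aa 5 (j-1)))"
proof (cases j)
  case 0 then show ?thesis by (simp add: C2_def aa_def)
next
  case (Suc k)
  define X where "X = real ((4*j+1) choose j)"
  define Y where "Y = real ((4*j) choose j)"
  define Z where "Z = real ((4*j) choose k)"
  have h1: "(4*j+1 - j) * ((4*j+1) choose j) = (4*j+1) * ((4*j+1-1) choose j)"
    by (rule binomial_absorb_comp)
  have "(3*j+1) * ((4*j+1) choose j) = (4*j+1) * ((4*j) choose j)"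
  proof -
    have "4*j+1-j = 3*j+1" by simp
    then show ?thesis using h1 by simp
  qed
  then have hX: "(3*real j+1) * X = (4*real j+1) * Y" unfolding X_def Y_def
    by (metis (mono_tags, lifting) of_nat_1 of_nat_add of_nat_mult of_nat_numeral)
  have h2: "j * ((4*j) choose j) = (4*j) * ((4*j - 1) choose (j - 1))"
    using times_binomial_minus1_eq[of j "4*j"] Suc by simp
  have h3: "(4*j - (j-1)) * ((4*j) choose (j-1)) = (4*j) * ((4*j-1) choose (j-1))"
    by (rule binomial_absorb_comp)
  have "4*j - (j-1) = 3*j+1" using Suc by simp
  then have h3': "(3*j+1) * ((4*j) choose k) = (4*j) * ((4*j-1) choose (j-1))" using h3 Suc by (simp add: ac_simps)
  have "j * ((4*j) choose j) = (3*j+1) * ((4*j) choose k)" using h2 h3' by simp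
  then have hZ: "real j * Y = (3*real j+1) * Z" unfolding Y_def Z_def
    by (metis (mono_tags, lifting) of_nat_1 of_nat_add of_nat_mult of_nat_numeral)
  have pos: "3*real j+1 > 0" by simp
  have X': "X = (4*real j+1) * Y / (3*real j+1)" using hX pos by (simp add: field_simps)
  have Z': "Z = real j * Y / (3*real j+1)" using hZ pos by (simp add: field_simps)
  have a2: "real (aa 2 j) = X" unfolding aa_def X_def by simp
  have a1: "real (aa 1 j) = Y" unfolding aa_def Y_def by simp
  have a5: "real (aa 5 (j-1)) = Z" unfolding aa_def Z_def using Suc
    by (simp add: algebra_simps)
  have c2: "C2 j = (2 * real j + 1) / (4 * real j + 1) * X" unfolding C2_def X_def by simp
  have alg: "(2 * real j + 1) / (4 * real j + 1) * ((4*real j+1) * Y / (3*real j+1))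
     = ((4*real j+1) * Y / (3*real j+1) + Y) / 2 - 3/2 * (real j * Y / (3*real j+1))"
  proof -
    have n1: "4*real j+1 \<noteq> 0" "3*real j+1 \<noteq> 0" by (simp_all add: add_nonneg_eq_0_iff)
    have L: "(2 * real j + 1) / (4 * real j + 1) * ((4*real j+1) * Y / (3*real j+1)) = (2*real j+1)*Y/(3*real j+1)"
      using n1 by simp
    have R: "((4*real j+1) * Y / (3*real j+1) + Y) / 2 - 3/2 * (real j * Y / (3*real j+1))
       = ((4*real j+1) * Y + (3*real j+1)*Y - 3 * (real j * Y)) / (2*(3*real j+1))"
      using n1 aux[of "3*real j+1" "(4*real j+1) * Y" Y "real j * Y"] by simp
    have R2: "((4*real j+1) * Y + (3*real j+1)*Y - 3 * (real j * Y)) = 2 * ((2*real j+1)*Y)"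
      by (simp add: algebra_simps)
    show ?thesis unfolding L R R2 by (rule aux2[symmetric])
  qed
  show ?thesis using Suc unfolding c2 a1 a2 a5 using alg X' Z' by simp
qed

lemma C3_aa: "C3 j = real (aa 1 j) / 2" by (simp add: C3_def aa_def)
lemma C4_aa: "C4 j = real (aa 2 j)" by (simp add: C4_def aa_def)
lemma C1_aa: "C1 j = real (aa 3 j)" by (simp add: C1_def aa_def)

lemma FF_real: "(\<Sum>j=0..n. real (aa r j) * real (aa s (n-j))) = real (FF r s n)"
  by (simp add: FF_def)

lemma C2_conv: "(\<Sum>j=0..Suc m. C2 j * real (aa s (Suc m - j)))
   = (real (FF 2 s (Suc m)) + real (FF 1 s (Suc m))) / 2 - 3/2 * real (FF 5 s m)"
proof -
  have "(\<Sum>j=0..Suc m. C2 j * real (aa s (Suc m - j)))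
     = (\<Sum>j=0..Suc m. (real (aa 2 j) * real (aa s (Suc m - j)) + real (aa 1 j) * real (aa s (Suc m - j))) / 2
         - 3/2 * ((if j = 0 then 0 else real (aa 5 (j-1))) * real (aa s (Suc m - j))))"
    by (rule sum.cong) (simp_all add: C2_formula algebra_simps add_divide_distrib)
  also have "\<dots> = (\<Sum>j=0..Suc m. real (aa 2 j) * real (aa s (Suc m - j)) + real (aa 1 j) * real (aa s (Suc m - j))) / 2
         - 3/2 * (\<Sum>j=0..Suc m. (if j = 0 then 0 else real (aa 5 (j-1))) * real (aa s (Suc m - j)))"
    by (simp only: sum_subtractf sum_divide_distrib sum_distrib_left)
  also have "(\<Sum>j=0..Suc m. (if j = 0 then 0 else real (aa 5 (j-1))) * real (aa s (Suc m - j)))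
      = (\<Sum>j=0..m. real (aa 5 j) * real (aa s (m - j)))"
    by (subst sum.atLeast0_atMost_Suc_shift) simp
  also have "(\<Sum>j=0..Suc m. real (aa 2 j) * real (aa s (Suc m - j)) + real (aa 1 j) * real (aa s (Suc m - j)))
      = real (FF 2 s (Suc m)) + real (FF 1 s (Suc m))"
    by (simp only: sum.distrib FF_real)
  finally show ?thesis by (simp only: FF_real)
qed

theorem corollary6p2:
  fixes h :: nat
  assumes "h \<ge> 1"
  shows "(\<Sum>j=0..h. C3 j * C3 (h-j)) = 2 * (\<Sum>j=0..h-1. C2 j * C1 (h-1-j)) \<and>
         (\<Sum>j=0..h. C3 j * C4 (h-j)) =
           (\<Sum>j=0..h. C2 j * C3 (h-j)) + (\<Sum>j=0..h-1. C1 j * C1 (h-1-j)) \<and>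
         (\<Sum>j=0..h. C4 j * C4 (h-j)) = 2 * (\<Sum>j=0..h. C3 j * C1 (h-j))"
proof -
  obtain n where hn: "h = Suc n" using assms by (cases h) auto
  have e3: "(\<Sum>j=0..h. C4 j * C4 (h-j)) = 2 * (\<Sum>j=0..h. C3 j * C1 (h-j))"
  proof -
    have "(\<Sum>j=0..h. C4 j * C4 (h-j)) = real (FF 2 2 h)" by (simp add: C4_aa FF_real)
    moreover have "(\<Sum>j=0..h. C3 j * C1 (h-j)) = real (FF 1 3 h) / 2"
      by (simp add: C3_aa C1_aa FF_real[symmetric] sum_divide_distrib)
    moreover have "FF 2 2 h = FF 1 3 h" using FFs[of 2 2 h] FFs[of 1 3 h] by simp
    ultimately show ?thesis by simp
  qed
  have e2: "(\<Sum>j=0..h. C3 j * C4 (h-j)) =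
           (\<Sum>j=0..h. C2 j * C3 (h-j)) + (\<Sum>j=0..h-1. C1 j * C1 (h-1-j))"
  proof -
    have a: "(\<Sum>j=0..h. C3 j * C4 (h-j)) = real (FF 1 2 h) / 2"
      by (simp add: C3_aa C4_aa FF_real[symmetric] sum_divide_distrib)
    have b: "(\<Sum>j=0..h. C2 j * C3 (h-j)) = ((real (FF 2 1 h) + real (FF 1 1 h)) / 2 - 3/2 * real (FF 5 1 n)) / 2"
    proof -
      have "(\<Sum>j=0..h. C2 j * C3 (h-j)) = (\<Sum>j=0..h. C2 j * real (aa 1 (h-j))) / 2"
        by (simp add: C3_aa sum_divide_distrib)
      then show ?thesis using C2_conv[where m=n and s=1] unfolding hn by simp
    qed
    have c: "(\<Sum>j=0..h-1. C1 j * C1 (h-1-j)) = real (FF 3 3 n)"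
      unfolding hn by (simp add: C1_aa FF_real)
    have r: "FF 0 3 h = FF 0 2 h + FF 0 6 n" using G_rec[of 2 n] hn by (simp add: numeral_eq_Suc)
    have "FF 1 2 h = FF 0 3 h" "FF 2 1 h = FF 0 3 h" "FF 1 1 h = FF 0 2 h" "FF 5 1 n = FF 0 6 n" "FF 3 3 n = FF 0 6 n"
      using FFs[of 1 2 h] FFs[of 2 1 h] FFs[of 1 1 h] FFs[of 5 1 n] FFs[of 3 3 n] by (simp_all add: numeral_eq_Suc)
    then show ?thesis unfolding a b c using r
      by (simp add: field_simps)
  qed
  have e1: "(\<Sum>j=0..h. C3 j * C3 (h-j)) = 2 * (\<Sum>j=0..h-1. C2 j * C1 (h-1-j))"
  proof (cases n)
    case 0
    then show ?thesis using hn by (simp add: C3_def C2_def C1_def)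
  next
    case (Suc m)
    have a: "(\<Sum>j=0..h. C3 j * C3 (h-j)) = real (FF 1 1 h) / 4"
      by (simp add: C3_aa FF_real[symmetric] sum_divide_distrib)
    have b: "(\<Sum>j=0..h-1. C2 j * C1 (h-1-j)) = (real (FF 2 3 n) + real (FF 1 3 n)) / 2 - 3/2 * real (FF 5 3 m)"
      using C2_conv[where m=m and s=3] unfolding hn Suc by (simp add: C1_aa)
    have "FF 1 1 h = FF 0 2 h" "FF 2 3 n = FF 0 5 n" "FF 1 3 n = FF 0 4 n" "FF 5 3 m = FF 0 8 m"
      using FFs[of 1 1 h] FFs[of 2 3 n] FFs[of 1 3 n] FFs[of 5 3 m] by (simp_all add: numeral_eq_Suc)
    moreover have "FF 0 2 h = FF 0 1 h + FF 0 5 n" using G_rec[of 1 n] hn by (simp add: numeral_eq_Suc)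
    moreover have "FF 0 1 h = FF 0 0 h + FF 0 4 n" using G_rec[of 0 n] hn by (simp add: numeral_eq_Suc)
    moreover have "FF 0 5 n = FF 0 4 n + FF 0 8 m" using G_rec[of 4 m] Suc by (simp add: numeral_eq_Suc)
    moreover have "16 * FF 0 0 h + 9 * FF 0 2 h = 24 * FF 0 1 h" using G_ii hn by simp
    ultimately show ?thesis unfolding a b by (simp add: field_simps)
  qed
  show ?thesis using e1 e2 e3 by blast
qed

end
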